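(* Let $\mathcal X=\{\vec x^{(1)},\dots,\vec x^{(M)}\}\subset\mathbb{R}^d$, and let $\vec u\subseteq[d]$. For each $\vec v\subseteq\vec u$ let $\mathcal I_{\vec v}$ be a finite family of frequency vectors $\vec\omega\in\mathbb{R}^d$ with $\vec\omega_{\vec v^c}=\vec 0$ (with $\mathcal I_\varnothing=\{\vec 0\}$), let $\vec A_{\vec v}=\left(\mathrm{e}^{\mathrm{i}\langle\vec\omega_{\vec v},\vec x_{\vec v}\rangle}\right)_{\vec x\in\mathcal X,\vec\omega\in\mathcal I_{\vec v}}\in\mathbb{C}^{M\times|\mathcal I_{\vec v}|}$, let $\vec a_{\vec v}\in\mathbb{C}^{|\mathcal I_{\vec v}|}$, and let $f_{\vec v}$ denote the function on $\mathcal X$ given by the vector $\vec A_{\vec v}\vec a_{\vec v}$, i.e. $f_{\vec v}(\vec x_{\vec v})=\sum_{\vec\omega\in\mathcal I_{\vec v}}(\vec a_{\vec v})_{\vec\omega}\mathrm{e}^{\mathrm{i}\langle\vec\omega_{\vec v},\vec x_{\vec v}\rangle}$. Define $$\hat{\vec W}_{\vec u}=\frac{1}{M^2}\vec A_{\vec u}^*\Big(\sum_{\vec v\subsetneq\vec u}\vec A_{\vec v}\vec A_{\vec v}^*\Big)\vec A_{\vec u}.$$ Then $$\vec a_{\vec u}^*\hat{\vec W}_{\vec u}\vec a_{\vec u}\ge\sum_{\vec v\subsetneq\vec u,\ \vec a_{\vec v}\neq\vec 0}\frac{1}{\|\vec a_{\vec v}\|_2^2}\,\big|\langle f_{\vec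 u},f_{\vec v}\rangle_{\mathcal X}\big|^2,$$ where $\langle g,h\rangle_{\mathcal X}=\frac1M\sum_{\vec x\in\mathcal X}g(\vec x)\overline{h(\vec x)}$.
   Context: $[d]=\{1,\dots,d\}$, $\vec x_{\vec v}=(x_i)_{i\in\vec v}$, $\vec v^c=[d]\setminus\vec v$; the sum over $\vec v\subsetneq\vec u$ includes $\vec v=\varnothing$. $\vec A^*$ denotes the conjugate transpose. *)

theory Defs
  imports "HOL-Analysis.Analysis" "HOL-Library.Complex_Order"
begin

text \<open>Coordinates of R^d are indexed by the finite type 'd (so [d] = UNIV, subsets u of [d]
are sets of type 'd set).  Frequency families are I :: 'd set => (real^'d) set,
coefficient vectors are a v :: real^'d => complex (indexed by the frequencies in I v).\<close>

definition sub_inner :: "'d::finite set \<Rightarrow> real^'d \<Rightarrow> real^'d \<Rightarrow> real" where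
  "sub_inner v w x = (\<Sum>j\<in>v. w $ j * x $ j)"

text \<open>Entry (x, omega) of the matrix A_v: exp(i <omega_v, x_v>).\<close>
definition Aent :: "'d::finite set \<Rightarrow> real^'d \<Rightarrow> real^'d \<Rightarrow> complex" where
  "Aent v x w = exp (\<i> * complex_of_real (sub_inner v w x))"

definition fv :: "('d::finite set \<Rightarrow> (real^'d) set) \<Rightarrow> ('d set \<Rightarrow> real^'d \<Rightarrow> complex)
    \<Rightarrow> 'd set \<Rightarrow> real^'d \<Rightarrow> complex" where
  "fv I a v x = (\<Sum>w\<in>I v. a v w * Aent v x w)"

definition inner_X :: "(real^'d::finite) set \<Rightarrow> (real^'d \<Rightarrow> complex) \<Rightarrow> (real^'d \<Rightarrow> complex) \<Rightarrow> complex" where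
  "inner_X X g h = (\<Sum>x\<in>X. g x * cnj (h x)) / of_nat (card X)"

text \<open>Entry (w, w') of What_u = 1/M^2 A_u^* (sum_{v proper subset u} A_v A_v^* ) A_u.\<close>
definition What :: "(real^'d::finite) set \<Rightarrow> ('d set \<Rightarrow> (real^'d) set) \<Rightarrow> 'd set
    \<Rightarrow> real^'d \<Rightarrow> real^'d \<Rightarrow> complex" where
  "What X I u w w' = (1 / (of_nat (card X))^2) *
     (\<Sum>x\<in>X. \<Sum>y\<in>X. cnj (Aent u x w) *
        (\<Sum>v\<in>{v. v \<subset> u}. \<Sum>\<eta>\<in>I v. Aent v x \<eta> * cnj (Aent v y \<eta>)) * Aent u y w')"

definition quad_form :: "'i set \<Rightarrow> ('i \<Rightarrow> 'i \<Rightarrow> complex) \<Rightarrow> ('i \<Rightarrow> complex) \<Rightarrow> complex" where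
  "quad_form S W a = (\<Sum>w\<in>S. \<Sum>w'\<in>S. cnj (a w) * W w w' * a w')"

definition norm2_sq :: "'i set \<Rightarrow> ('i \<Rightarrow> complex) \<Rightarrow> real" where
  "norm2_sq S a = (\<Sum>w\<in>S. (cmod (a w))^2)"

end

theory Submission
  imports Defs
begin

lemma cs_complex:
  fixes p q :: "'i \<Rightarrow> complex"
  shows "(cmod (\<Sum>i\<in>S. cnj (p i) * q i))^2 \<le> (\<Sum>i\<in>S. (cmod (p i))^2) * (\<Sum>i\<in>S. (cmod (q i))^2)"
proof -
  have "cmod (\<Sum>i\<in>S. cnj (p i) * q i) \<le> (\<Sum>i\<in>S. cmod (p i) * cmod (q i))"
    by (rule order_trans[OF norm_sum]) (simp add: norm_mult)
  hence "(cmod (\<Sum>i\<in>S. cnj (p i) * q i))^2 \<le> (\<Sum>i\<in>S. cmod (p i) * cmod (q i))^2"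
    by (simp add: power_mono)
  also have "\<dots> \<le> (\<Sum>i\<in>S. (cmod (p i))^2) * (\<Sum>i\<in>S. (cmod (q i))^2)"
    by (rule Cauchy_Schwarz_ineq_sum)
  finally show ?thesis .
qed

lemma aux_div:
  fixes M S :: complex
  assumes "cnj M = M"
  shows "1 / M^2 * (cnj S * S) = cnj (S / M) * (S / M)"
  using assms by (simp add: power2_eq_square)

lemma quad_expand:
  fixes B :: "'x \<Rightarrow> 'w \<Rightarrow> complex" and K :: "'x \<Rightarrow> 'x \<Rightarrow> complex"
  assumes "finite S" "finite X"
  shows "(\<Sum>w\<in>S. \<Sum>w'\<in>S. cnj (a w) * (c * (\<Sum>x\<in>X. \<Sum>y\<in>X. cnj (B x w) * K x y * B y w')) * a w')
    = c * (\<Sum>x\<in>X. \<Sum>y\<in>X. cnj (\<Sum>w\<in>S. a w * B x w) * K x y * (\<Sum>w'\<in>S. a w' * B y w'))"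
proof -
  have "(\<Sum>w\<in>S. \<Sum>w'\<in>S. cnj (a w) * (c * (\<Sum>x\<in>X. \<Sum>y\<in>X. cnj (B x w) * K x y * B y w')) * a w')
     = c * (\<Sum>w\<in>S. \<Sum>w'\<in>S. \<Sum>x\<in>X. \<Sum>y\<in>X. cnj (a w) * cnj (B x w) * K x y * B y w' * a w')"
    by (simp add: sum_distrib_left sum_distrib_right mult_ac)
  also have "(\<Sum>w\<in>S. \<Sum>w'\<in>S. \<Sum>x\<in>X. \<Sum>y\<in>X. cnj (a w) * cnj (B x w) * K x y * B y w' * a w')
     = (\<Sum>w\<in>S. \<Sum>x\<in>X. \<Sum>w'\<in>S. \<Sum>y\<in>X. cnj (a w) * cnj (B x w) * K x y * B y w' * a w')"
    by (rule sum.cong[OF refl], rule sum.swap)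
  also have "\<dots> = (\<Sum>x\<in>X. \<Sum>w\<in>S. \<Sum>w'\<in>S. \<Sum>y\<in>X. cnj (a w) * cnj (B x w) * K x y * B y w' * a w')"
    by (rule sum.swap)
  also have "\<dots> = (\<Sum>x\<in>X. \<Sum>w\<in>S. \<Sum>y\<in>X. \<Sum>w'\<in>S. cnj (a w) * cnj (B x w) * K x y * B y w' * a w')"
    by (rule sum.cong[OF refl], rule sum.cong[OF refl], rule sum.swap)
  also have "\<dots> = (\<Sum>x\<in>X. \<Sum>y\<in>X. \<Sum>w\<in>S. \<Sum>w'\<in>S. cnj (a w) * cnj (B x w) * K x y * B y w' * a w')"
    by (rule sum.cong[OF refl], rule sum.swap)
  also have "\<dots> = (\<Sum>x\<in>X. \<Sum>y\<in>X. cnj (\<Sum>w\<in>S. a w * B x w) * K x y * (\<Sum>w'\<in>S. a w' * B y w'))"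
    by (simp add: sum_distrib_left sum_distrib_right mult_ac)
  finally show ?thesis .
qed

lemma kernel_expand:
  fixes g :: "'x \<Rightarrow> complex" and A :: "'v \<Rightarrow> 'x \<Rightarrow> 'e \<Rightarrow> complex"
  assumes "finite V" "finite X" "\<And>v. v \<in> V \<Longrightarrow> finite (E v)"
  shows "(\<Sum>x\<in>X. \<Sum>y\<in>X. cnj (g x) * (\<Sum>v\<in>V. \<Sum>e\<in>E v. A v x e * cnj (A v y e)) * g y)
    = (\<Sum>v\<in>V. \<Sum>e\<in>E v. cnj (\<Sum>y\<in>X. g y * cnj (A v y e)) * (\<Sum>y\<in>X. g y * cnj (A v y e)))"
proof -
  have "(\<Sum>x\<in>X. \<Sum>y\<in>X. cnj (g x) * (\<Sum>v\<in>V. \<Sum>e\<in>E v. A v x e * cnj (A v y e)) * g y)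
      = (\<Sum>x\<in>X. \<Sum>y\<in>X. \<Sum>v\<in>V. \<Sum>e\<in>E v. cnj (g x) * A v x e * cnj (A v y e) * g y)"
    by (simp add: sum_distrib_left sum_distrib_right mult_ac)
  also have "\<dots> = (\<Sum>x\<in>X. \<Sum>v\<in>V. \<Sum>y\<in>X. \<Sum>e\<in>E v. cnj (g x) * A v x e * cnj (A v y e) * g y)"
    by (rule sum.cong[OF refl], rule sum.swap)
  also have "\<dots> = (\<Sum>x\<in>X. \<Sum>v\<in>V. \<Sum>e\<in>E v. \<Sum>y\<in>X. cnj (g x) * A v x e * cnj (A v y e) * g y)"
    by (rule sum.cong[OF refl], rule sum.cong[OF refl], rule sum.swap)
  also have "\<dots> = (\<Sum>v\<in>V. \<Sum>x\<in>X. \<Sum>e\<in>E v. \<Sum>y\<in>X. cnj (g x) * A v x e * cnj (A v y e) * g y)"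
    by (rule sum.swap)
  also have "\<dots> = (\<Sum>v\<in>V. \<Sum>e\<in>E v. \<Sum>x\<in>X. \<Sum>y\<in>X. cnj (g x) * A v x e * cnj (A v y e) * g y)"
    by (rule sum.cong[OF refl], rule sum.swap)
  also have "\<dots> = (\<Sum>v\<in>V. \<Sum>e\<in>E v. cnj (\<Sum>y\<in>X. g y * cnj (A v y e)) * (\<Sum>y\<in>X. g y * cnj (A v y e)))"
    by (simp add: sum_distrib_left sum_distrib_right mult_ac)
  finally show ?thesis .
qed

theorem lemma4p5:
  fixes X :: "(real^'d::finite) set"
    and I :: "'d set \<Rightarrow> (real^'d) set"
    and a :: "'d set \<Rightarrow> real^'d \<Rightarrow> complex"
    and u :: "'d set"
  assumes "finite X"
    and "\<And>v. v \<subseteq> u \<Longrightarrow> finite (I v)"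
    and "\<And>v w j. v \<subseteq> u \<Longrightarrow> w \<in> I v \<Longrightarrow> j \<notin> v \<Longrightarrow> w $ j = 0"
    and "I {} = {0}"
  shows "quad_form (I u) (What X I u) (a u) \<ge>
    complex_of_real (\<Sum>v\<in>{v. v \<subset> u \<and> (\<exists>w\<in>I v. a v w \<noteq> 0)}.
        (cmod (inner_X X (fv I a u) (fv I a v)))^2 / norm2_sq (I v) (a v))"
proof -
  define g where "g = fv I a u"
  define M where "M = (of_nat (card X) :: complex)"
  define c where "c v e = (\<Sum>y\<in>X. g y * cnj (Aent v y e)) / M" for v e
  have fin: "finite {v. v \<subset> u}" by simp
  have finI: "\<And>v. v \<in> {v. v \<subset> u} \<Longrightarrow> finite (I v)" using assms(2) by auto
  have cM: "cnj M = M" unfolding M_def by simp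
  have Q: "quad_form (I u) (What X I u) (a u)
     = complex_of_real (\<Sum>v\<in>{v. v \<subset> u}. \<Sum>e\<in>I v. (cmod (c v e))^2)"
  proof -
    have "quad_form (I u) (What X I u) (a u) = (1 / M^2) *
      (\<Sum>x\<in>X. \<Sum>y\<in>X. cnj (g x) * (\<Sum>v\<in>{v. v \<subset> u}. \<Sum>\<eta>\<in>I v. Aent v x \<eta> * cnj (Aent v y \<eta>)) * g y)"
      unfolding quad_form_def What_def g_def fv_def M_def
      by (rule quad_expand) (use assms in auto)
    also have "\<dots> = (1 / M^2) * (\<Sum>v\<in>{v. v \<subset> u}. \<Sum>e\<in>I v. cnj (\<Sum>y\<in>X. g y * cnj (Aent v y e)) * (\<Sum>y\<in>X. g y * cnj (Aent v y e)))"
      by (subst kernel_expand[OF fin assms(1) finI]) auto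
    also have "\<dots> = (\<Sum>v\<in>{v. v \<subset> u}. \<Sum>e\<in>I v. (1 / M^2) * (cnj (\<Sum>y\<in>X. g y * cnj (Aent v y e)) * (\<Sum>y\<in>X. g y * cnj (Aent v y e))))"
      by (simp only: sum_distrib_left)
    also have "\<dots> = (\<Sum>v\<in>{v. v \<subset> u}. \<Sum>e\<in>I v. cnj (c v e) * c v e)"
      by (intro sum.cong refl) (simp only: c_def aux_div[OF cM])
    also have "\<dots> = complex_of_real (\<Sum>v\<in>{v. v \<subset> u}. \<Sum>e\<in>I v. (cmod (c v e))^2)"
      unfolding of_real_sum by (intro sum.cong refl) (simp only: of_real_power complex_norm_square[symmetric] mult.commute)
    finally show ?thesis .
  qed
  have IP: "inner_X X g (fv I a v) = (\<Sum>e\<in>I v. cnj (a v e) * c v e)" if "v \<subset> u" for v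
  proof -
    have "inner_X X g (fv I a v) = (\<Sum>x\<in>X. \<Sum>e\<in>I v. cnj (a v e) * (g x * cnj (Aent v x e))) / M"
      unfolding inner_X_def fv_def M_def by (simp add: sum_distrib_left mult_ac)
    also have "\<dots> = (\<Sum>e\<in>I v. \<Sum>x\<in>X. cnj (a v e) * (g x * cnj (Aent v x e))) / M"
      by (subst sum.swap) rule
    also have "\<dots> = (\<Sum>e\<in>I v. cnj (a v e) * c v e)"
      unfolding c_def by (simp add: sum_divide_distrib sum_distrib_left)
    finally show ?thesis .
  qed
  have T: "(cmod (inner_X X g (fv I a v)))^2 / norm2_sq (I v) (a v) \<le> (\<Sum>e\<in>I v. (cmod (c v e))^2)"
    if "v \<subset> u" for v
  proof -
    have N: "norm2_sq (I v) (a v) \<ge> 0" unfolding norm2_sq_def by (simp add: sum_nonneg)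
    have "(cmod (inner_X X g (fv I a v)))^2 \<le> norm2_sq (I v) (a v) * (\<Sum>e\<in>I v. (cmod (c v e))^2)"
      unfolding IP[OF that] norm2_sq_def by (rule cs_complex)
    thus ?thesis using N
      by (cases "norm2_sq (I v) (a v) = 0") (auto simp: divide_le_eq mult.commute sum_nonneg)
  qed
  have "(\<Sum>v\<in>{v. v \<subset> u \<and> (\<exists>w\<in>I v. a v w \<noteq> 0)}.
        (cmod (inner_X X (fv I a u) (fv I a v)))^2 / norm2_sq (I v) (a v))
     \<le> (\<Sum>v\<in>{v. v \<subset> u \<and> (\<exists>w\<in>I v. a v w \<noteq> 0)}. \<Sum>e\<in>I v. (cmod (c v e))^2)"
    by (rule sum_mono) (use T g_def in auto)
  also have "\<dots> \<le> (\<Sum>v\<in>{v. v \<subset> u}. \<Sum>e\<in>I v. (cmod (c v e))^2)"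
    by (rule sum_mono2) (auto simp: sum_nonneg)
  finally show ?thesis unfolding Q less_eq_complex_def by simp
qed

end
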